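(* Let $(P,\preceq)$ be a locally finite meet semilattice, $S=\{x_1,\dots,x_n\}\subseteq P$ a finite meet closed set, and suppose $x_i\in S$ generates a double-chain set in $S$, with $\mathrm{meetcl}(C_S(x_i))\setminus C_S(x_i)=A_i\cup B_i$, $A_i\cap B_i=\emptyset$, $A_i,B_i$ chains. Let $x_a$ and $x_b$ be the top elements of $A_i$ and $B_i$ (if one chain is empty, $x_a=x_b$ is the top of the other). For $x_k\in A_i\cup B_i$ let $\eta(x_k)$ be the number of elements $z\in C_S(x_i)$ attached to $x_k$ (i.e. covering $x_k$ in $\mathrm{meetcl}(C_S(x_i))$). (I) If no element of $C_S(x_i)$ is attached to both chains, then $\mu_S(x_j,x_i)=1$ if $x_j=x_i$; $=-1$ if $x_j\in C_S(x_i)$; $=\eta(x_j)-1$ if $x_j\in\{x_a,x_b\}$ is maximal in $A_i\cup B_i$; $=\eta(x_j)$ if $x_j\in\{x_a,x_b\}$ is not maximal in $A_i\cup B_i$; $=\eta(x_j)$ if $x_j\in A_i\cup B_i$ is not maximal in $A_i\cup B_i$ and $x_j\ne x_a\wedge x_b$; $=\eta(x_j)+1$ if $x_a,x_b$ are incomparable and $x_j=x_a\wedge x_b\in A_i\cup B_i$; and $=0$ otherwise. (II) If exactly one element $x_p\in C_S(x_i)$ is attached to some $x_q\in A_i$ and to some $x_r\in B_i$, then $\mu_S(x_j,x_i)=1$ if $x_j=x_i$; $=-1$ if $x_j\in C_S(x_i)$; $=\eta(x_j)-1$ if $x_j=x_a$ or $x_j=x_b$; $=\eta(x_j)$ if $x_j\in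 A_i\cup B_i$ with $x_j\neq x_a$, $x_j\ne x_b$; and $=0$ otherwise.
   Context: $\mu_S$ is the Möbius function of the finite poset $(S,\preceq)$: $\mu_S(x,x)=1$ and $\mu_S(y,x)=-\sum_{y\prec w\preceq x,\ w\in S}\mu_S(w,x)$ for $y\prec x$, and $\mu_S(y,x)=0$ if $y\not\preceq x$. $C_S(x)$ is the set of elements of $S$ covered by $x$ in $S$; $\mathrm{meetcl}(C)$ is the set of all finite meets of elements of $C$. An element $x\in S$ generates a double-chain set in $S$ if $\mathrm{meetcl}(C_S(x))\setminus C_S(x)$ is a union of two disjoint (possibly empty) chains. An element $z\in C_S(x_i)$ is attached to $x_k\in A_i\cup B_i$ if $z$ covers $x_k$ in the poset $\mathrm{meetcl}(C_S(x_i))$; $z$ is attached to a chain if it is attached to some element of it. *)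

theory Defs
  imports Main
begin

function mobius :: "'a::order set \<Rightarrow> 'a \<Rightarrow> 'a \<Rightarrow> int" where
  "mobius S y x =
     (if finite S \<and> y \<in> S \<and> x \<in> S \<and> y \<le> x then
        (if y = x then 1 else - (\<Sum>w\<in>{w\<in>S. y < w \<and> w \<le> x}. mobius S w x))
      else 0)"
  by pat_completeness auto
termination
proof (relation "measure (\<lambda>(S, y, x). card {v\<in>S. y \<le> v \<and> v \<le> x})")
  show "wf (measure (\<lambda>(S, y, x). card {v\<in>S. y \<le> v \<and> v \<le> x}))" by simp
next
  fix S :: "'a set" and y x w
  assume h: "finite S \<and> y \<in> S \<and> x \<in> S \<and> y \<le> x" "y \<noteq> x" "w \<in> {w\<in>S. y < w \<and> w \<le> x}"
  have "{v\<in>S. w \<le> v \<and> v \<le> x} \<subset> {v\<in>S. y \<le> v \<and> v \<le> x}"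
  proof
    show "{v\<in>S. w \<le> v \<and> v \<le> x} \<subseteq> {v\<in>S. y \<le> v \<and> v \<le> x}"
      using h(3) by (blast intro: order.trans order.strict_implies_order)
    show "{v\<in>S. w \<le> v \<and> v \<le> x} \<noteq> {v\<in>S. y \<le> v \<and> v \<le> x}"
    proof
      assume e: "{v\<in>S. w \<le> v \<and> v \<le> x} = {v\<in>S. y \<le> v \<and> v \<le> x}"
      have "y \<in> {v\<in>S. y \<le> v \<and> v \<le> x}" using h(1) by simp
      then have "w \<le> y" using e by blast
      then show False using h(3) by (simp add: leD)
    qed
  qed
  then have "card {v\<in>S. w \<le> v \<and> v \<le> x} < card {v\<in>S. y \<le> v \<and> v \<le> x}"
    using h by (intro psubset_card_mono) auto
  then show "((S, w, x), S, y, x) \<in> measure (\<lambda>(S, y, x). card {v\<in>S. y \<le> v \<and> v \<le> x})"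
    by simp
qed

definition covered_in :: "'a::order set \<Rightarrow> 'a \<Rightarrow> 'a set" where
  "covered_in S x = {y\<in>S. y < x \<and> \<not> (\<exists>w\<in>S. y < w \<and> w < x)}"

definition covers_in :: "'a::order set \<Rightarrow> 'a \<Rightarrow> 'a \<Rightarrow> bool" where
  "covers_in T z y \<longleftrightarrow> y \<in> T \<and> z \<in> T \<and> y < z \<and> \<not> (\<exists>w\<in>T. y < w \<and> w < z)"

definition meetcl :: "'a::semilattice_inf set \<Rightarrow> 'a set" where
  "meetcl C = {Inf_fin D | D. D \<subseteq> C \<and> D \<noteq> {} \<and> finite D}"

definition meet_closed :: "'a::semilattice_inf set \<Rightarrow> bool" where
  "meet_closed S \<longleftrightarrow> (\<forall>x\<in>S. \<forall>y\<in>S. inf x y \<in> S)"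

definition locally_finite :: "'a::order itself \<Rightarrow> bool" where
  "locally_finite _ \<longleftrightarrow> (\<forall>x y :: 'a. finite {x..y})"

definition is_chain :: "'a::order set \<Rightarrow> bool" where
  "is_chain A \<longleftrightarrow> (\<forall>x\<in>A. \<forall>y\<in>A. x \<le> y \<or> y \<le> x)"

definition attached :: "'a::semilattice_inf set \<Rightarrow> 'a \<Rightarrow> 'a \<Rightarrow> 'a \<Rightarrow> bool" where
  "attached S x z xk \<longleftrightarrow> z \<in> covered_in S x \<and> covers_in (meetcl (covered_in S x)) z xk"

definition attached_to_set :: "'a::semilattice_inf set \<Rightarrow> 'a \<Rightarrow> 'a \<Rightarrow> 'a set \<Rightarrow> bool" where
  "attached_to_set S x z A \<longleftrightarrow> (\<exists>xk\<in>A. attached S x z xk)"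

definition eta :: "'a::semilattice_inf set \<Rightarrow> 'a \<Rightarrow> 'a \<Rightarrow> int" where
  "eta S x xk = int (card {z \<in> covered_in S x. attached S x z xk})"

definition maximal_in :: "'a::order set \<Rightarrow> 'a \<Rightarrow> bool" where
  "maximal_in T x \<longleftrightarrow> x \<in> T \<and> \<not> (\<exists>y\<in>T. x < y)"

definition is_top_of :: "'a::order set \<Rightarrow> 'a \<Rightarrow> bool" where
  "is_top_of A t \<longleftrightarrow> t \<in> A \<and> (\<forall>y\<in>A. y \<le> t)"

end

theory Submission
  imports Defs
begin

locale mc =
  fixes S :: "'a::semilattice_inf set" and x :: 'a
  assumes finS: "finite S" and mcl: "meet_closed S" and xS: "x \<in> S"
begin

abbreviation "C \<equiv> covered_in S x"
abbreviation "M \<equiv> meetcl C"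

lemma C_S: "C \<subseteq> S" by (auto simp: covered_in_def)
lemma C_lt: "c \<in> C \<Longrightarrow> c < x" by (auto simp: covered_in_def)
lemma C_anti: "c1 \<in> C \<Longrightarrow> c2 \<in> C \<Longrightarrow> c1 \<le> c2 \<Longrightarrow> c1 = c2"
  unfolding covered_in_def using order.order_iff_strict by blast
lemma finC: "finite C" using C_S finS finite_subset by blast

lemma Inf_S: "finite E \<Longrightarrow> E \<noteq> {} \<Longrightarrow> E \<subseteq> S \<Longrightarrow> Inf_fin E \<in> S"
proof (induction E rule: finite_ne_induct)
  case (singleton x) then show ?case by simp
next
  case (insert y F) then show ?case using mcl by (simp add: meet_closed_def)
qed

lemma M_S: "M \<subseteq> S" using Inf_S C_S unfolding meetcl_def by blast
lemma finM: "finite M" using M_S finS finite_subset by blast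

lemma M_E: "w \<in> M \<Longrightarrow> \<exists>E. E \<subseteq> C \<and> E \<noteq> {} \<and> finite E \<and> w = Inf_fin E"
  unfolding meetcl_def by blast

lemma M_below_C: "w \<in> M \<Longrightarrow> \<exists>c\<in>C. w \<le> c"
  using M_E Inf_fin.coboundedI by blast

lemma M_lt: "w \<in> M \<Longrightarrow> w < x"
  using M_below_C C_lt order.strict_trans1 by blast

lemma C_M: "C \<subseteq> M"
proof
  fix c assume "c \<in> C"
  then have "{c} \<subseteq> C \<and> {c} \<noteq> {} \<and> finite {c} \<and> c = Inf_fin {c}" by simp
  then show "c \<in> M" unfolding meetcl_def by blast
qed

lemma M_inf: "w1 \<in> M \<Longrightarrow> w2 \<in> M \<Longrightarrow> inf w1 w2 \<in> M"
proof -
  assume "w1 \<in> M" "w2 \<in> M"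
  then obtain E1 E2 where "E1 \<subseteq> C" "E1 \<noteq> {}" "finite E1" "w1 = Inf_fin E1"
    "E2 \<subseteq> C" "E2 \<noteq> {}" "finite E2" "w2 = Inf_fin E2" using M_E by meson
  then have "inf w1 w2 = Inf_fin (E1 \<union> E2)" by (simp add: Inf_fin.union)
  moreover have "E1 \<union> E2 \<subseteq> C \<and> E1 \<union> E2 \<noteq> {} \<and> finite (E1 \<union> E2)"
    using \<open>E1 \<subseteq> C\<close> \<open>E2 \<subseteq> C\<close> \<open>E1 \<noteq> {}\<close> \<open>finite E1\<close> \<open>finite E2\<close> by auto
  ultimately show ?thesis unfolding meetcl_def by blast
qed

lemma C_not_le_D: "p \<in> C \<Longrightarrow> w \<in> M \<Longrightarrow> w \<notin> C \<Longrightarrow> \<not> p \<le> w"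
proof
  assume "p \<in> C" "w \<in> M" "w \<notin> C" "p \<le> w"
  then obtain c where "c \<in> C" "w \<le> c" using M_below_C by blast
  then have "p = c" using C_anti \<open>p \<in> C\<close> \<open>p \<le> w\<close> order.trans by blast
  then show False using \<open>p \<le> w\<close> \<open>w \<le> c\<close> \<open>w \<notin> C\<close> \<open>c \<in> C\<close> order.antisym by blast
qed

lemma C_up: "m \<in> C \<Longrightarrow> w \<in> M \<Longrightarrow> m \<le> w \<Longrightarrow> w = m"
proof -
  assume "m \<in> C" "w \<in> M" "m \<le> w"
  then obtain c where "c \<in> C" "w \<le> c" using M_below_C by blast
  then have "m = c" using C_anti \<open>m \<in> C\<close> \<open>m \<le> w\<close> order.trans by blast
  then show "w = m" using \<open>m \<le> w\<close> \<open>w \<le> c\<close> order.antisym by blast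
qed

lemma D_lt_C: "w \<in> M \<Longrightarrow> w \<notin> C \<Longrightarrow> c \<in> C \<Longrightarrow> w \<le> c \<Longrightarrow> w < c"
  using order.order_iff_strict by auto

lemma exists_C_above: assumes "y \<in> S" "y < x" shows "\<exists>c\<in>C. y \<le> c"
proof -
  have "finite {w\<in>S. y \<le> w \<and> w < x}" using finS by simp
  moreover have "y \<in> {w\<in>S. y \<le> w \<and> w < x}" using assms by simp
  ultimately obtain c where c: "c \<in> {w\<in>S. y \<le> w \<and> w < x}"
    "\<forall>b\<in>{w\<in>S. y \<le> w \<and> w < x}. c \<le> b \<longrightarrow> c = b"
    using finite_has_maximal2 by blast
  have "c \<in> C"
  proof -
    have "c \<in> S" "c < x" using c(1) by auto
    moreover have "\<not> (\<exists>w\<in>S. c < w \<and> w < x)"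
    proof
      assume "\<exists>w\<in>S. c < w \<and> w < x"
      then obtain w where "w \<in> S" "c < w" "w < x" by blast
      moreover have "y \<le> w" using c(1) \<open>c < w\<close> by auto
      ultimately show False using c(2) by auto
    qed
    ultimately show ?thesis unfolding covered_in_def by blast
  qed
  then show ?thesis using c by auto
qed

lemma reduce: assumes "y \<in> S" "y < x" shows "\<exists>m\<in>M. y \<le> m \<and> (\<forall>w\<in>M. y \<le> w \<longleftrightarrow> m \<le> w)"
proof -
  define Cy where "Cy = {c\<in>C. y \<le> c}"
  have ne: "Cy \<noteq> {}" using exists_C_above assms Cy_def by auto
  have fin: "finite Cy" using finC Cy_def by simp
  define m where "m = Inf_fin Cy"
  have mM: "m \<in> M" unfolding meetcl_def m_def using ne fin Cy_def by blast
  have ym: "y \<le> m" using Inf_fin.bounded_iff[OF fin ne] Cy_def m_def by auto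
  have "y \<le> w \<longleftrightarrow> m \<le> w" if "w \<in> M" for w
  proof
    assume "y \<le> w"
    obtain E where E: "E \<subseteq> C" "E \<noteq> {}" "finite E" "w = Inf_fin E" using M_E \<open>w \<in> M\<close> by blast
    have "\<forall>e\<in>E. y \<le> e" using \<open>y \<le> w\<close> E Inf_fin.bounded_iff by blast
    then have "E \<subseteq> Cy" using E Cy_def by auto
    then have "\<forall>e\<in>E. m \<le> e" unfolding m_def using fin Inf_fin.coboundedI by blast
    then show "m \<le> w" using E Inf_fin.bounded_iff by blast
  next
    assume "m \<le> w" then show "y \<le> w" using ym by simp
  qed
  then show ?thesis using mM ym by blast
qed


lemma mobius_eq:
  fixes f :: "'a \<Rightarrow> int"
  assumes f1: "f x = 1" and f0: "\<And>y. y \<in> S \<Longrightarrow> y \<notin> M \<Longrightarrow> y \<noteq> x \<Longrightarrow> f y = 0"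
    and fsum: "\<And>m. m \<in> M \<Longrightarrow> f x + (\<Sum>w\<in>{w\<in>M. m \<le> w}. f w) = 0"
  shows "y \<in> S \<Longrightarrow> mobius S y x = f y"
proof (induction "card {v\<in>S. y \<le> v \<and> v \<le> x}" arbitrary: y rule: less_induct)
  case (less y)
  show ?case
  proof (cases "y \<le> x")
    case False
    then have "y \<notin> M" "y \<noteq> x" using M_lt order.strict_implies_order by auto
    then show ?thesis using False f0 less.prems by simp
  next
    case True
    show ?thesis
    proof (cases "y = x")
      case True then show ?thesis using f1 finS xS by simp
    next
      case False
      define W where "W = {w\<in>S. y < w \<and> w \<le> x}"
      have ylx: "y < x" using True False by simp
      have IH: "mobius S w x = f w" if "w \<in> W" for w
      proof (rule less.hyps)
        show "w \<in> S" using that W_def by simp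
        have "{v\<in>S. w \<le> v \<and> v \<le> x} \<subset> {v\<in>S. y \<le> v \<and> v \<le> x}"
        proof
          show "{v\<in>S. w \<le> v \<and> v \<le> x} \<subseteq> {v\<in>S. y \<le> v \<and> v \<le> x}"
            using that W_def by auto
          show "{v\<in>S. w \<le> v \<and> v \<le> x} \<noteq> {v\<in>S. y \<le> v \<and> v \<le> x}"
          proof
            assume e: "{v\<in>S. w \<le> v \<and> v \<le> x} = {v\<in>S. y \<le> v \<and> v \<le> x}"
            have "y \<in> {v\<in>S. y \<le> v \<and> v \<le> x}" using less.prems True by simp
            then have "w \<le> y" using e by blast
            then show False using that W_def by auto
          qed
        qed
        then show "card {v\<in>S. w \<le> v \<and> v \<le> x} < card {v\<in>S. y \<le> v \<and> v \<le> x}"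
          using finS by (intro psubset_card_mono) auto
      qed
      have mob: "mobius S y x = - (\<Sum>w\<in>W. f w)"
        using less.prems True False finS xS IH unfolding W_def by simp
      obtain m where m: "m \<in> M" "y \<le> m" "\<forall>w\<in>M. y \<le> w \<longleftrightarrow> m \<le> w"
        using reduce less.prems ylx by blast
      define T where "T = {w\<in>S. y \<le> w \<and> w \<le> x}"
      define R where "R = insert x {w\<in>M. m \<le> w}"
      have finT: "finite T" using finS T_def by simp
      have RT: "R \<subseteq> T" using R_def T_def xS ylx M_S M_lt m by (auto intro: order.strict_implies_order)
      have z: "\<forall>i\<in>T-R. f i = 0" using f0 T_def R_def m by auto
      have "sum f T = sum f R" using sum.mono_neutral_right[OF finT RT z] .
      also have "\<dots> = f x + (\<Sum>w\<in>{w\<in>M. m \<le> w}. f w)"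
        unfolding R_def using finM M_lt by (subst sum.insert) auto
      also have "\<dots> = 0" using fsum m by simp
      finally have "sum f T = 0" .
      moreover have "T = insert y W" using T_def W_def less.prems True by auto
      moreover have "y \<notin> W" using W_def by simp
      moreover have "finite W" using W_def finS by simp
      ultimately have "f y + sum f W = 0" by simp
      then show ?thesis using mob by simp
    qed
  qed
qed
end

locale dc = mc +
  fixes A B :: "'a set" and xa xb :: 'a
  assumes dcs: "meetcl (covered_in S x) - covered_in S x = A \<union> B"
    and disj: "A \<inter> B = {}" and chA: "is_chain A" and chB: "is_chain B"
    and topA: "A \<noteq> {} \<Longrightarrow> is_top_of A xa"
    and topB: "B \<noteq> {} \<Longrightarrow> is_top_of B xb"
    and emA: "A = {} \<Longrightarrow> xa = xb"
    and emB: "B = {} \<Longrightarrow> xb = xa"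
begin

lemma A_M: "A \<subseteq> M" and B_M: "B \<subseteq> M" and A_C: "w \<in> A \<Longrightarrow> w \<notin> C" and B_C: "w \<in> B \<Longrightarrow> w \<notin> C"
  using dcs by auto

lemma D_iff: "w \<in> A \<union> B \<longleftrightarrow> w \<in> M \<and> w \<notin> C" using dcs by auto

lemma le_xa: "w \<in> A \<Longrightarrow> w \<le> xa" using topA unfolding is_top_of_def by auto
lemma le_xb: "w \<in> B \<Longrightarrow> w \<le> xb" using topB unfolding is_top_of_def by auto

lemma xa_D: "A \<union> B \<noteq> {} \<Longrightarrow> xa \<in> A \<union> B" and xb_D: "A \<union> B \<noteq> {} \<Longrightarrow> xb \<in> A \<union> B"
  using topA topB emA emB unfolding is_top_of_def by (metis Un_empty Un_iff)+

lemma max_D: "maximal_in (A \<union> B) w \<Longrightarrow> w = xa \<or> w = xb"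
proof -
  assume mx: "maximal_in (A \<union> B) w"
  then have w: "w \<in> A \<union> B" unfolding maximal_in_def by simp
  then have "xa \<in> A \<union> B" "xb \<in> A \<union> B" using xa_D xb_D by auto
  then show ?thesis using w mx le_xa le_xb unfolding maximal_in_def
    by (metis UnE order.order_iff_strict)
qed

lemma att_E: "attached S x c w \<Longrightarrow> c \<in> C \<and> w \<in> M \<and> w < c \<and> \<not> (\<exists>v\<in>M. w < v \<and> v < c) \<and> w \<in> A \<union> B"
proof -
  assume a: "attached S x c w"
  then have h: "c \<in> C \<and> w \<in> M \<and> w < c \<and> \<not> (\<exists>v\<in>M. w < v \<and> v < c)"
    unfolding attached_def covers_in_def by auto
  then have "w \<notin> C" using C_anti by (metis order.strict_iff_not)
  then show ?thesis using h D_iff by auto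
qed

lemma cover_exists: assumes "c \<in> C" "m \<in> A \<union> B" "m \<le> c" shows "\<exists>w\<in>A \<union> B. m \<le> w \<and> attached S x c w"
proof -
  have mM: "m \<in> M" "m \<notin> C" using assms D_iff by auto
  have "m < c" using assms mM order.order_iff_strict by auto
  then have "m \<in> {w\<in>M. w < c}" using mM by simp
  then obtain w where w: "w \<in> {w\<in>M. w < c}" "m \<le> w" "\<forall>b\<in>{w\<in>M. w < c}. w \<le> b \<longrightarrow> w = b"
    using finite_has_maximal2[of "{w\<in>M. w < c}" m] finM by auto
  have cM: "c \<in> M" using C_M assms by auto
  have "attached S x c w" unfolding attached_def covers_in_def using w cM assms(1)
    by (auto dest: order.strict_implies_order)
  then show ?thesis using att_E w by blast
qed

lemma att_chain_unique:
  assumes "is_chain X" "w1 \<in> X" "w2 \<in> X" "attached S x c w1" "attached S x c w2"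
  shows "w1 = w2"
proof -
  have "w1 \<le> w2 \<or> w2 \<le> w1" using assms(1-3) unfolding is_chain_def by blast
  then show ?thesis using att_E[OF assms(4)] att_E[OF assms(5)] by (metis order.order_iff_strict)
qed

lemma inf_cov: assumes "attached S x p q" "w \<in> A \<union> B" "q \<le> w" shows "inf p w = q"
proof -
  have a: "p \<in> C" "q \<in> M" "q < p" "\<not> (\<exists>v\<in>M. q < v \<and> v < p)" using att_E[OF assms(1)] by auto
  have wM: "w \<in> M" "w \<notin> C" using assms D_iff by auto
  have iM: "inf p w \<in> M" using M_inf C_M a wM by auto
  have qi: "q \<le> inf p w" using a assms by (simp add: order.strict_implies_order)
  have ip: "inf p w \<le> p" by simp
  have "inf p w \<noteq> p" using C_not_le_D[OF a(1) wM] by (metis inf.absorb_iff1)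
  then have "inf p w < p" using ip by (simp add: order.strict_iff_order)
  then show ?thesis using a(4) iM qi order.order_iff_strict by blast
qed

lemma key_aux:
  assumes "attached S x p q" "attached S x p r" "q \<noteq> r" "q \<le> m \<or> m \<le> q"
    "m \<in> A \<union> B" "t \<in> A \<union> B" "r \<le> t" "m \<le> t"
  shows "m \<le> p"
proof (cases "m \<le> q")
  case True then show ?thesis using att_E[OF assms(1)] by (meson order.strict_implies_order order.trans)
next
  case False
  then have qm: "q \<le> m" using assms(4) by simp
  have "inf p m = q" using inf_cov[OF assms(1) assms(5) qm] .
  have "q \<le> t" using qm assms(8) by simp
  moreover have "q \<le> p" using att_E[OF assms(1)] by (simp add: order.strict_implies_order)
  ultimately have "q \<le> inf p t" by simp
  also have "inf p t = r" using inf_cov[OF assms(2) assms(6) assms(7)] .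
  finally have "q < r" using assms(3) order.order_iff_strict by auto
  then show ?thesis using att_E[OF assms(1)] att_E[OF assms(2)] by blast
qed

lemma key:
  assumes "attached S x p q" "attached S x p r" "q \<in> A" "r \<in> B"
    "m \<in> A \<union> B" "m \<le> xa" "m \<le> xb"
  shows "m \<le> q \<and> m \<le> r"
proof -
  have qr: "q \<noteq> r" using assms disj by auto
  have xaD: "xa \<in> A \<union> B" "xb \<in> A \<union> B" using xa_D xb_D assms by auto
  have "m \<le> p"
  proof (cases "m \<in> A")
    case True
    then have "q \<le> m \<or> m \<le> q" using chA assms unfolding is_chain_def by blast
    then show ?thesis using key_aux[OF assms(1,2) qr _ assms(5) xaD(2) le_xb[OF assms(4)] assms(7)] by blast
  next
    case False
    then have "m \<in> B" using assms by auto
    then have "r \<le> m \<or> m \<le> r" using chB assms unfolding is_chain_def by blast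
    then show ?thesis using key_aux[OF assms(2,1) qr[symmetric] _ assms(5) xaD(1) le_xa[OF assms(3)] assms(6)] by blast
  qed
  then have "m \<le> inf p xa" "m \<le> inf p xb" using assms by auto
  moreover have "inf p xa = q" using inf_cov[OF assms(1) xaD(1) le_xa[OF assms(3)]] .
  moreover have "inf p xb = r" using inf_cov[OF assms(2) xaD(2) le_xb[OF assms(4)]] .
  ultimately show ?thesis by simp
qed

lemma card_if: "finite X \<Longrightarrow> int (card {c\<in>X. P c}) = (\<Sum>c\<in>X. if P c then 1 else 0)"
  by (simp add: sum.inter_filter[symmetric])

lemma card01: assumes "finite X" "\<And>a b. a \<in> X \<Longrightarrow> b \<in> X \<Longrightarrow> a = b"
  shows "card X = (if X = {} then 0 else 1)"
proof (cases "X = {}")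
  case False
  then obtain a where "a \<in> X" by blast
  then have "X = {a}" using assms(2) by blast
  then show ?thesis by simp
qed simp

lemma per_c:
  assumes "m \<in> A \<union> B" "c \<in> C"
  shows "int (card {w\<in>{w\<in>A \<union> B. m \<le> w}. attached S x c w}) =
     (if m \<le> c then 1 else 0) +
     (if (\<exists>q\<in>A. m \<le> q \<and> attached S x c q) \<and> (\<exists>r\<in>B. m \<le> r \<and> attached S x c r) then 1 else 0)"
proof -
  define XA where "XA = {w\<in>A. m \<le> w \<and> attached S x c w}"
  define XB where "XB = {w\<in>B. m \<le> w \<and> attached S x c w}"
  have fA: "finite XA" "finite XB" using finM A_M B_M XA_def XB_def finite_subset
    by (metis (no_types, lifting) mem_Collect_eq subset_iff)+
  have e: "{w\<in>{w\<in>A \<union> B. m \<le> w}. attached S x c w} = XA \<union> XB" using XA_def XB_def by auto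
  have dj: "XA \<inter> XB = {}" using XA_def XB_def disj by auto
  have cA: "card XA = (if XA = {} then 0 else 1)"
    by (rule card01[OF fA(1)]) (use att_chain_unique[OF chA] XA_def in blast)
  have cB: "card XB = (if XB = {} then 0 else 1)"
    by (rule card01[OF fA(2)]) (use att_chain_unique[OF chB] XB_def in blast)
  have ne: "(XA \<noteq> {} \<or> XB \<noteq> {}) \<longleftrightarrow> m \<le> c"
  proof
    assume "XA \<noteq> {} \<or> XB \<noteq> {}"
    then obtain w where "m \<le> w" "attached S x c w" using XA_def XB_def by blast
    then show "m \<le> c" using att_E by (meson order.strict_implies_order order.trans)
  next
    assume "m \<le> c"
    then obtain w where "w \<in> A \<union> B" "m \<le> w" "attached S x c w" using cover_exists assms by blast
    then show "XA \<noteq> {} \<or> XB \<noteq> {}" using XA_def XB_def by blast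
  qed
  have both: "((\<exists>q\<in>A. m \<le> q \<and> attached S x c q) \<and> (\<exists>r\<in>B. m \<le> r \<and> attached S x c r)) \<longleftrightarrow> XA \<noteq> {} \<and> XB \<noteq> {}"
    using XA_def XB_def by blast
  have "card (XA \<union> XB) = card XA + card XB" using card_Un_disjoint[OF fA dj] .
  then show ?thesis unfolding e using cA cB ne both by auto
qed

lemma eta_sum:
  assumes "m \<in> A \<union> B"
  shows "(\<Sum>w\<in>{w\<in>A \<union> B. m \<le> w}. eta S x w) = int (card {c\<in>C. m \<le> c}) +
     int (card {c\<in>C. (\<exists>q\<in>A. m \<le> q \<and> attached S x c q) \<and> (\<exists>r\<in>B. m \<le> r \<and> attached S x c r)})"
proof -
  define U where "U = {w\<in>A \<union> B. m \<le> w}"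
  have fU: "finite U" using U_def finM A_M B_M finite_subset by (metis (no_types, lifting) Un_subset_iff mem_Collect_eq subset_iff)
  have "(\<Sum>w\<in>U. eta S x w) = (\<Sum>w\<in>U. \<Sum>c\<in>C. if attached S x c w then 1 else 0)"
    unfolding eta_def using card_if[OF finC] by (intro sum.cong) auto
  also have "\<dots> = (\<Sum>c\<in>C. \<Sum>w\<in>U. if attached S x c w then 1 else 0)" by (rule sum.swap)
  also have "\<dots> = (\<Sum>c\<in>C. int (card {w\<in>U. attached S x c w}))"
    using card_if[OF fU] by simp
  also have "\<dots> = (\<Sum>c\<in>C. (if m \<le> c then 1 else 0) +
     (if (\<exists>q\<in>A. m \<le> q \<and> attached S x c q) \<and> (\<exists>r\<in>B. m \<le> r \<and> attached S x c r) then 1 else 0))"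
    unfolding U_def using per_c[OF assms] by (intro sum.cong) auto
  also have "\<dots> = int (card {c\<in>C. m \<le> c}) +
     int (card {c\<in>C. (\<exists>q\<in>A. m \<le> q \<and> attached S x c q) \<and> (\<exists>r\<in>B. m \<le> r \<and> attached S x c r)})"
    by (simp add: sum.distrib card_if[OF finC])
  finally show ?thesis unfolding U_def .
qed

lemma fsum_C:
  fixes f :: "'a \<Rightarrow> int"
  assumes "f x = 1" "\<And>w. w \<in> C \<Longrightarrow> f w = -1" "m \<in> C"
  shows "f x + (\<Sum>w\<in>{w\<in>M. m \<le> w}. f w) = 0"
proof -
  have "{w\<in>M. m \<le> w} = {m}" using C_up assms(3) C_M by auto
  then show ?thesis using assms by simp
qed

lemma fsum_D:
  fixes f \<delta> :: "'a \<Rightarrow> int"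
  assumes "f x = 1" "\<And>w. w \<in> C \<Longrightarrow> f w = -1" "m \<in> A \<union> B"
    and fD: "\<And>w. w \<in> A \<union> B \<Longrightarrow> f w = eta S x w + \<delta> w"
    and ds: "(\<Sum>w\<in>{w\<in>A \<union> B. m \<le> w}. \<delta> w) = -1 -
     int (card {c\<in>C. (\<exists>q\<in>A. m \<le> q \<and> attached S x c q) \<and> (\<exists>r\<in>B. m \<le> r \<and> attached S x c r)})"
  shows "f x + (\<Sum>w\<in>{w\<in>M. m \<le> w}. f w) = 0"
proof -
  define U where "U = {w\<in>A \<union> B. m \<le> w}"
  have fU: "finite U" using U_def finM A_M B_M finite_subset by (metis (no_types, lifting) Un_subset_iff mem_Collect_eq subset_iff)
  have e: "{w\<in>M. m \<le> w} = {c\<in>C. m \<le> c} \<union> U" using U_def D_iff C_M by auto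
  have dj: "{c\<in>C. m \<le> c} \<inter> U = {}" using U_def D_iff by auto
  have "(\<Sum>w\<in>{w\<in>M. m \<le> w}. f w) = (\<Sum>w\<in>{c\<in>C. m \<le> c}. f w) + (\<Sum>w\<in>U. f w)"
    unfolding e using finC fU dj by (intro sum.union_disjoint) auto
  also have "(\<Sum>w\<in>{c\<in>C. m \<le> c}. f w) = - int (card {c\<in>C. m \<le> c})"
    using assms(2) by simp
  also have "(\<Sum>w\<in>U. f w) = (\<Sum>w\<in>U. eta S x w) + (\<Sum>w\<in>U. \<delta> w)"
    using fD U_def by (simp add: sum.distrib)
  finally show ?thesis using eta_sum[OF assms(3)] ds assms(1) unfolding U_def by simp
qed

end

lemma (in dc) neg_card: "finite X \<Longrightarrow> (\<Sum>w\<in>X. (if P w then -1 else 0) + (if Q w then 1 else 0) :: int)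
   = - int (card {w\<in>X. P w}) + int (card {w\<in>X. Q w})"
proof -
  assume fX: "finite X"
  have e: "(\<lambda>w. if P w then -1 else 0 :: int) = (\<lambda>w. - (if P w then 1 else 0))" by auto
  have "(\<Sum>w\<in>X. (if P w then -1 else 0) + (if Q w then 1 else 0) :: int)
     = (\<Sum>w\<in>X. (if P w then -1 else 0 :: int)) + (\<Sum>w\<in>X. (if Q w then 1 else 0))"
    by (rule sum.distrib)
  also have "(\<Sum>w\<in>X. (if P w then -1 else 0 :: int)) = - (\<Sum>w\<in>X. (if P w then 1 else 0))"
    unfolding e by (rule sum_negf)
  finally show ?thesis using card_if[OF fX] by simp
qed

lemma (in dc) U_fin: "finite {w\<in>A \<union> B. m \<le> w}"
  using finM A_M B_M finite_subset by (metis (no_types, lifting) Un_subset_iff mem_Collect_eq subset_iff)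

lemma (in dc) caseI_delta:
  assumes "m \<in> A \<union> B"
  shows "(\<Sum>w\<in>{w\<in>A \<union> B. m \<le> w}. (if maximal_in (A \<union> B) w then -1 else 0) +
      (if \<not> (xa \<le> xb \<or> xb \<le> xa) \<and> w = inf xa xb then 1 else 0) :: int) = -1"
proof -
  define U where "U = {w\<in>A \<union> B. m \<le> w}"
  have ne: "A \<union> B \<noteq> {}" using assms by auto
  have xaD: "xa \<in> A \<union> B" and xbD: "xb \<in> A \<union> B" using xa_D xb_D ne by auto
  have mle: "m \<le> xa \<or> m \<le> xb" using assms le_xa le_xb by auto
  have "(\<Sum>w\<in>U. (if maximal_in (A \<union> B) w then -1 else 0) +
      (if \<not> (xa \<le> xb \<or> xb \<le> xa) \<and> w = inf xa xb then 1 else 0) :: int)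
      = - int (card {w\<in>U. maximal_in (A \<union> B) w}) + int (card {w\<in>U. \<not> (xa \<le> xb \<or> xb \<le> xa) \<and> w = inf xa xb})"
    unfolding U_def by (rule neg_card[OF U_fin[of m], of "maximal_in (A \<union> B)" "\<lambda>w. \<not> (xa \<le> xb \<or> xb \<le> xa) \<and> w = inf xa xb"])
  also have "\<dots> = -1"
  proof (cases "xa \<le> xb \<or> xb \<le> xa")
    case True
    define t where "t = (if xa \<le> xb then xb else xa)"
    have tD: "t \<in> A \<union> B" using t_def xaD xbD by auto
    have below: "w \<le> t" if "w \<in> A \<union> B" for w
      using that le_xa le_xb True t_def by (auto intro: order.trans)
    have "{w\<in>U. maximal_in (A \<union> B) w} = {t}"
    proof
      show "{t} \<subseteq> {w\<in>U. maximal_in (A \<union> B) w}"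
      proof -
        have "\<not> (\<exists>y\<in>A \<union> B. t < y)" using below by (meson order.strict_iff_not)
        moreover have "m \<le> t" using below assms by blast
        ultimately show ?thesis using tD U_def unfolding maximal_in_def by auto
      qed
      show "{w\<in>U. maximal_in (A \<union> B) w} \<subseteq> {t}"
      proof
        fix w assume w: "w \<in> {w\<in>U. maximal_in (A \<union> B) w}"
        then have "w \<in> A \<union> B" "\<not> w < t" using tD unfolding U_def maximal_in_def by auto
        then show "w \<in> {t}" using below order.order_iff_strict by auto
      qed
    qed
    moreover have "{w\<in>U. \<not> (xa \<le> xb \<or> xb \<le> xa) \<and> w = inf xa xb} = {}" using True by auto
    ultimately show ?thesis by simp
  next
    case False
    define g where "g = inf xa xb"
    have xab: "xa \<noteq> xb" using False by auto
    have gM: "g \<in> M" using M_inf xaD xbD D_iff g_def by auto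
    have "g \<notin> C" using C_not_le_D[of g xa] xaD D_iff g_def by auto
    then have gD: "g \<in> A \<union> B" using gM D_iff by auto
    have maxa: "maximal_in (A \<union> B) xa" unfolding maximal_in_def
    proof (intro conjI xaD notI)
      assume "\<exists>y\<in>A \<union> B. xa < y"
      then obtain y where "y \<in> A \<union> B" "xa < y" by blast
      then show False using le_xa le_xb False by (auto dest: order.strict_trans2 intro: order.strict_implies_order)
    qed
    have maxb: "maximal_in (A \<union> B) xb" unfolding maximal_in_def
    proof (intro conjI xbD notI)
      assume "\<exists>y\<in>A \<union> B. xb < y"
      then obtain y where "y \<in> A \<union> B" "xb < y" by blast
      then show False using le_xa le_xb False by (auto dest: order.strict_trans2 intro: order.strict_implies_order)
    qed
    have e1: "{w\<in>U. maximal_in (A \<union> B) w} = {w\<in>{xa, xb}. m \<le> w}"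
      using max_D maxa maxb xaD xbD U_def by auto
    have e2: "{w\<in>U. \<not> (xa \<le> xb \<or> xb \<le> xa) \<and> w = inf xa xb} = {w\<in>{g}. m \<le> w}"
      using False gD U_def g_def by auto
    have "- int (card {w\<in>{xa, xb}. m \<le> w}) + int (card {w\<in>{g}. m \<le> w}) = -1"
    proof (cases "m \<le> xa \<and> m \<le> xb")
      case True
      then have "{w\<in>{xa, xb}. m \<le> w} = {xa, xb}" "{w\<in>{g}. m \<le> w} = {g}" using g_def by auto
      then show ?thesis using xab by simp
    next
      case F: False
      then have "\<not> m \<le> g" using g_def by simp
      then have z: "{w\<in>{g}. m \<le> w} = {}" by auto
      have "{w\<in>{xa, xb}. m \<le> w} = {xa} \<or> {w\<in>{xa, xb}. m \<le> w} = {xb}" using F mle by auto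
      then have "card {w\<in>{xa, xb}. m \<le> w} = 1" by (elim disjE) simp_all
      then show ?thesis using z by simp
    qed
    then show ?thesis by (simp only: e1 e2)
  qed
  finally show ?thesis unfolding U_def .
qed

lemma (in dc) caseII_delta:
  assumes "m \<in> A \<union> B" "A \<noteq> {}" "B \<noteq> {}"
  shows "(\<Sum>w\<in>{w\<in>A \<union> B. m \<le> w}. (if w = xa \<or> w = xb then -1 else 0) :: int)
     = - int (card {w\<in>{xa,xb}. m \<le> w})"
proof -
  have xab: "xa \<in> A" "xb \<in> B" using topA topB assms unfolding is_top_of_def by auto
  have "{w\<in>{w\<in>A \<union> B. m \<le> w}. w = xa \<or> w = xb} = {w\<in>{xa,xb}. m \<le> w}" using xab by auto
  moreover have "(\<Sum>w\<in>{w\<in>A \<union> B. m \<le> w}. (if w = xa \<or> w = xb then -1 else 0) :: int)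
     = - int (card {w\<in>{w\<in>A \<union> B. m \<le> w}. w = xa \<or> w = xb})"
    using neg_card[OF U_fin[of m], of "\<lambda>w. w = xa \<or> w = xb" "\<lambda>_. False"] by simp
  ultimately show ?thesis by simp
qed

theorem theorem3p1:
  fixes S A B :: "'a::semilattice_inf set" and xi xa xb :: 'a
  assumes locfin: "locally_finite TYPE('a)"
    and finS: "finite S" and mcl: "meet_closed S"
    and xiS: "xi \<in> S"
    and dc: "meetcl (covered_in S xi) - covered_in S xi = A \<union> B"
    and disj: "A \<inter> B = {}" and chA: "is_chain A" and chB: "is_chain B"
    and topA: "A \<noteq> {} \<Longrightarrow> is_top_of A xa"
    and topB: "B \<noteq> {} \<Longrightarrow> is_top_of B xb"
    and emA: "A = {} \<Longrightarrow> xa = xb"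
    and emB: "B = {} \<Longrightarrow> xb = xa"
  shows
   "(\<not> (\<exists>z\<in>covered_in S xi. attached_to_set S xi z A \<and> attached_to_set S xi z B) \<longrightarrow>
      (\<forall>xj\<in>S. mobius S xj xi =
        (if xj = xi then 1
         else if xj \<in> covered_in S xi then -1
         else if xj \<in> {xa, xb} \<and> maximal_in (A \<union> B) xj then eta S xi xj - 1
         else if xj \<in> {xa, xb} \<and> xj \<in> A \<union> B \<and> \<not> maximal_in (A \<union> B) xj then eta S xi xj
         else if xj \<in> A \<union> B \<and> \<not> maximal_in (A \<union> B) xj \<and> xj \<noteq> inf xa xb then eta S xi xj
         else if \<not> (xa \<le> xb \<or> xb \<le> xa) \<and> xj = inf xa xb \<and> xj \<in> A \<union> B then eta S xi xj + 1
         else 0)))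
    \<and>
    ((\<exists>!xp\<in>covered_in S xi. attached_to_set S xi xp A \<and> attached_to_set S xi xp B) \<longrightarrow>
      (\<forall>xj\<in>S. mobius S xj xi =
        (if xj = xi then 1
         else if xj \<in> covered_in S xi then -1
         else if xj = xa \<or> xj = xb then eta S xi xj - 1
         else if xj \<in> A \<union> B then eta S xi xj
         else 0)))"
proof -
  interpret dc S xi A B xa xb
    by unfold_locales (use finS mcl xiS dc disj chA chB topA topB emA emB in auto)
  show ?thesis
  proof (intro conjI impI)
    assume noboth: "\<not> (\<exists>z\<in>covered_in S xi. attached_to_set S xi z A \<and> attached_to_set S xi z B)"
    define f :: "'a \<Rightarrow> int" where "f = (\<lambda>xj.
        (if xj = xi then 1
         else if xj \<in> covered_in S xi then -1
         else if xj \<in> {xa, xb} \<and> maximal_in (A \<union> B) xj then eta S xi xj - 1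
         else if xj \<in> {xa, xb} \<and> xj \<in> A \<union> B \<and> \<not> maximal_in (A \<union> B) xj then eta S xi xj
         else if xj \<in> A \<union> B \<and> \<not> maximal_in (A \<union> B) xj \<and> xj \<noteq> inf xa xb then eta S xi xj
         else if \<not> (xa \<le> xb \<or> xb \<le> xa) \<and> xj = inf xa xb \<and> xj \<in> A \<union> B then eta S xi xj + 1
         else 0))"
    define \<delta> :: "'a \<Rightarrow> int" where "\<delta> = (\<lambda>w. (if maximal_in (A \<union> B) w then -1 else 0) +
      (if \<not> (xa \<le> xb \<or> xb \<le> xa) \<and> w = inf xa xb then 1 else 0))"
    have fx: "f xi = 1" by (simp add: f_def)
    have fC: "\<And>w. w \<in> covered_in S xi \<Longrightarrow> f w = -1" using C_lt by (auto simp: f_def)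
    have h2: "\<not> (xa \<le> xb \<or> xb \<le> xa) \<Longrightarrow> inf xa xb \<noteq> xa \<and> inf xa xb \<noteq> xb"
      by (metis inf.absorb_iff1 inf.absorb_iff2)
    have fD: "f w = eta S xi w + \<delta> w" if w: "w \<in> A \<union> B" for w
    proof -
      have "w \<noteq> xi" "w \<notin> covered_in S xi" using w D_iff M_lt by auto
      have h3: "xa \<le> xb \<or> xb \<le> xa \<Longrightarrow> inf xa xb = xa \<or> inf xa xb = xb"
        by (metis inf.absorb1 inf.absorb2)
      note ne = \<open>w \<noteq> xi\<close> \<open>w \<notin> covered_in S xi\<close>
      show ?thesis
      proof (cases "maximal_in (A \<union> B) w")
        case True
        then have "w \<in> {xa, xb}" using max_D by auto
        then have "\<not> (\<not> (xa \<le> xb \<or> xb \<le> xa) \<and> w = inf xa xb)" using h2 by auto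
        then show ?thesis using True \<open>w \<in> {xa, xb}\<close> ne unfolding f_def \<delta>_def by simp
      next
        case nm: False
        show ?thesis
        proof (cases "\<not> (xa \<le> xb \<or> xb \<le> xa) \<and> w = inf xa xb")
          case True
          then have "w \<notin> {xa, xb}" using h2 by auto
          then show ?thesis using True nm ne w unfolding f_def \<delta>_def by simp
        next
          case F: False
          have "w \<in> {xa, xb} \<or> w \<noteq> inf xa xb" using F h3 by auto
          then show ?thesis using F nm ne w unfolding f_def \<delta>_def by auto
        qed
      qed
    qed
    have "\<forall>xj\<in>S. mobius S xj xi = f xj"
    proof
      fix y assume yS: "y \<in> S"
      show "mobius S y xi = f y"
      proof (rule mobius_eq[where f=f])
        show "f xi = 1" by (rule fx)
        show "y \<in> S" by (rule yS)
      next
        show "\<And>y. y \<in> S \<Longrightarrow> y \<notin> meetcl (covered_in S xi) \<Longrightarrow> y \<noteq> xi \<Longrightarrow> f y = 0"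
          using C_M D_iff unfolding f_def maximal_in_def by auto
        fix m assume mM: "m \<in> meetcl (covered_in S xi)"
        show "f xi + (\<Sum>w\<in>{w\<in>meetcl (covered_in S xi). m \<le> w}. f w) = 0"
        proof (cases "m \<in> covered_in S xi")
          case True then show ?thesis using fsum_C[where f=f, OF fx fC] by blast
        next
          case False
          then have mD: "m \<in> A \<union> B" using mM D_iff by auto
          have e: "{c\<in>covered_in S xi. (\<exists>q\<in>A. m \<le> q \<and> attached S xi c q) \<and> (\<exists>r\<in>B. m \<le> r \<and> attached S xi c r)} = {}"
            using noboth unfolding attached_to_set_def by blast
          show ?thesis
          proof (rule fsum_D[where f=f and \<delta>=\<delta>, OF fx fC mD fD])
            show "(\<Sum>w\<in>{w\<in>A \<union> B. m \<le> w}. \<delta> w) = -1 -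
              int (card {c\<in>covered_in S xi. (\<exists>q\<in>A. m \<le> q \<and> attached S xi c q) \<and> (\<exists>r\<in>B. m \<le> r \<and> attached S xi c r)})"
              unfolding e \<delta>_def using caseI_delta[OF mD] by simp
          qed
        qed
      qed
    qed
    then show "\<forall>xj\<in>S. mobius S xj xi =
        (if xj = xi then 1
         else if xj \<in> covered_in S xi then -1
         else if xj \<in> {xa, xb} \<and> maximal_in (A \<union> B) xj then eta S xi xj - 1
         else if xj \<in> {xa, xb} \<and> xj \<in> A \<union> B \<and> \<not> maximal_in (A \<union> B) xj then eta S xi xj
         else if xj \<in> A \<union> B \<and> \<not> maximal_in (A \<union> B) xj \<and> xj \<noteq> inf xa xb then eta S xi xj
         else if \<not> (xa \<le> xb \<or> xb \<le> xa) \<and> xj = inf xa xb \<and> xj \<in> A \<union> B then eta S xi xj + 1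
         else 0)" unfolding f_def .
  next
    assume ex1: "\<exists>!xp\<in>covered_in S xi. attached_to_set S xi xp A \<and> attached_to_set S xi xp B"
    then obtain p where p: "p \<in> covered_in S xi" "attached_to_set S xi p A" "attached_to_set S xi p B"
      and puniq: "\<And>c. c \<in> covered_in S xi \<Longrightarrow> attached_to_set S xi c A \<Longrightarrow> attached_to_set S xi c B \<Longrightarrow> c = p"
      by blast
    obtain q r where qr: "q \<in> A" "attached S xi p q" "r \<in> B" "attached S xi p r"
      using p unfolding attached_to_set_def by blast
    have AB: "A \<noteq> {}" "B \<noteq> {}" using qr by auto
    have xab: "xa \<in> A" "xb \<in> B" using topA topB AB unfolding is_top_of_def by auto
    have xne: "xa \<noteq> xb" using xab disj by auto
    define f :: "'a \<Rightarrow> int" where "f = (\<lambda>xj.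
        (if xj = xi then 1
         else if xj \<in> covered_in S xi then -1
         else if xj = xa \<or> xj = xb then eta S xi xj - 1
         else if xj \<in> A \<union> B then eta S xi xj
         else 0))"
    define \<delta> :: "'a \<Rightarrow> int" where "\<delta> = (\<lambda>w. (if w = xa \<or> w = xb then -1 else 0))"
    have fx: "f xi = 1" by (simp add: f_def)
    have fC: "\<And>w. w \<in> covered_in S xi \<Longrightarrow> f w = -1" using C_lt by (auto simp: f_def)
    have fD: "f w = eta S xi w + \<delta> w" if w: "w \<in> A \<union> B" for w
    proof -
      have "w \<noteq> xi" "w \<notin> covered_in S xi" using w D_iff M_lt by auto
      then show ?thesis using w unfolding f_def \<delta>_def by auto
    qed
    have "\<forall>xj\<in>S. mobius S xj xi = f xj"
    proof
      fix y assume yS: "y \<in> S"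
      show "mobius S y xi = f y"
      proof (rule mobius_eq[where f=f])
        show "f xi = 1" by (rule fx)
        show "y \<in> S" by (rule yS)
      next
        show "\<And>y. y \<in> S \<Longrightarrow> y \<notin> meetcl (covered_in S xi) \<Longrightarrow> y \<noteq> xi \<Longrightarrow> f y = 0"
          using C_M D_iff xab unfolding f_def by auto
        fix m assume mM: "m \<in> meetcl (covered_in S xi)"
        show "f xi + (\<Sum>w\<in>{w\<in>meetcl (covered_in S xi). m \<le> w}. f w) = 0"
        proof (cases "m \<in> covered_in S xi")
          case True then show ?thesis using fsum_C[where f=f, OF fx fC] by blast
        next
          case False
          then have mD: "m \<in> A \<union> B" using mM D_iff by auto
          define BS where "BS = {c\<in>covered_in S xi. (\<exists>q\<in>A. m \<le> q \<and> attached S xi c q) \<and> (\<exists>r\<in>B. m \<le> r \<and> attached S xi c r)}"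
          have BSe: "BS = (if m \<le> xa \<and> m \<le> xb then {p} else {})"
          proof (cases "m \<le> xa \<and> m \<le> xb")
            case True
            have "m \<le> q \<and> m \<le> r" using key[OF qr(2) qr(4) qr(1) qr(3) mD] True by blast
            then have "p \<in> BS" using BS_def p(1) qr by blast
            moreover have "BS \<subseteq> {p}" using BS_def puniq unfolding attached_to_set_def by blast
            ultimately show ?thesis using True by auto
          next
            case False
            have "BS = {}"
            proof (rule ccontr)
              assume "BS \<noteq> {}"
              then obtain c q' r' where "q' \<in> A" "m \<le> q'" "r' \<in> B" "m \<le> r'" using BS_def by blast
              then show False using False le_xa le_xb by (meson order.trans)
            qed
            then show ?thesis using False by simp
          qed
          have cnt: "- int (card {w\<in>{xa,xb}. m \<le> w}) = -1 - int (card BS)"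
          proof (cases "m \<le> xa \<and> m \<le> xb")
            case True
            then have "{w\<in>{xa,xb}. m \<le> w} = {xa, xb}" by auto
            then show ?thesis using BSe True xne by simp
          next
            case F: False
            have "m \<le> xa \<or> m \<le> xb" using mD le_xa le_xb by auto
            then have "{w\<in>{xa, xb}. m \<le> w} = {xa} \<or> {w\<in>{xa, xb}. m \<le> w} = {xb}" using F by auto
            then have "card {w\<in>{xa, xb}. m \<le> w} = 1" by (elim disjE) simp_all
            then show ?thesis using BSe F by simp
          qed
          show ?thesis
          proof (rule fsum_D[where f=f and \<delta>=\<delta>, OF fx fC mD fD])
            show "(\<Sum>w\<in>{w\<in>A \<union> B. m \<le> w}. \<delta> w) = -1 -
              int (card {c\<in>covered_in S xi. (\<exists>q\<in>A. m \<le> q \<and> attached S xi c q) \<and> (\<exists>r\<in>B. m \<le> r \<and> attached S xi c r)})"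
              using caseII_delta[OF mD AB] cnt unfolding \<delta>_def BS_def by simp
          qed
        qed
      qed
    qed
    then show "\<forall>xj\<in>S. mobius S xj xi =
        (if xj = xi then 1
         else if xj \<in> covered_in S xi then -1
         else if xj = xa \<or> xj = xb then eta S xi xj - 1
         else if xj \<in> A \<union> B then eta S xi xj
         else 0)" unfolding f_def .
  qed
qed

end
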